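(* Let $X$ be the vertex set of a connected simplicial graph with bounded geometry, equipped with the shortest path metric, which is $\delta$-hyperbolic, and fix $e\in X$ and $p\geq 1$. For $x\in X$, $k\in\mathbb{N}$, $n\in\mathbb{N}\setminus\{0\}$, let $F_{x,k,n}$ be the set of all points of $X\setminus B(e;3\delta)$ lying on $g([n,2n])$ for some geodesic $g$ from some $y$ with $d(x,y)\leq k$ to $e$ (parametrised by arc length starting at $y$), let $F(x,k,n)\in\ell^p(X)$ be its characteristic function, and set \[ H(x,n)=\frac{1}{n}\sum_{0\leq k\leq n/4}F(x,k,n). \] Then there exists a constant $C$ such that for all $R\geq 0$, all $n\geq 1$ and all $x,y\in X$ with $d(x,y)\leq R$, \[ \|H(x,n)-H(y,n)\|_p\leq 2C(R+1)\,n^{-\frac{p-1}{p}}. \]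
   Context: Bounded geometry: for every $r$ there is a uniform bound on the cardinality of balls of radius $r$. $\delta$-hyperbolicity in the Rips sense: each side of a geodesic triangle lies in the $\delta$-neighbourhood of the union of the other two. *)

theory Defs
  imports "HOL-Analysis.Analysis"
begin

definition simple_graph :: "('a \<Rightarrow> 'a \<Rightarrow> bool) \<Rightarrow> bool" where
  "simple_graph E \<longleftrightarrow> (\<forall>x y. E x y \<longrightarrow> E y x) \<and> (\<forall>x. \<not> E x x)"

definition walk :: "('a \<Rightarrow> 'a \<Rightarrow> bool) \<Rightarrow> (nat \<Rightarrow> 'a) \<Rightarrow> nat \<Rightarrow> bool" where
  "walk E g L \<longleftrightarrow> (\<forall>i<L. E (g i) (g (Suc i)))"

definition graph_connected :: "('a \<Rightarrow> 'a \<Rightarrow> bool) \<Rightarrow> bool" where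
  "graph_connected E \<longleftrightarrow> (\<forall>x y. \<exists>g L. g 0 = x \<and> g L = y \<and> walk E g L)"

definition gdist :: "('a \<Rightarrow> 'a \<Rightarrow> bool) \<Rightarrow> 'a \<Rightarrow> 'a \<Rightarrow> nat" where
  "gdist E x y = (LEAST L. \<exists>g. g 0 = x \<and> g L = y \<and> walk E g L)"

definition bounded_geometry :: "('a \<Rightarrow> 'a \<Rightarrow> bool) \<Rightarrow> bool" where
  "bounded_geometry E \<longleftrightarrow>
     (\<forall>r::real. \<exists>N::nat. \<forall>x. finite {y. real (gdist E x y) \<le> r} \<and> card {y. real (gdist E x y) \<le> r} \<le> N)"

definition geodesic :: "('a \<Rightarrow> 'a \<Rightarrow> bool) \<Rightarrow> (nat \<Rightarrow> 'a) \<Rightarrow> 'a \<Rightarrow> 'a \<Rightarrow> bool" where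
  "geodesic E g x y \<longleftrightarrow> g 0 = x \<and> g (gdist E x y) = y \<and> walk E g (gdist E x y)"

definition geod_image :: "('a \<Rightarrow> 'a \<Rightarrow> bool) \<Rightarrow> (nat \<Rightarrow> 'a) \<Rightarrow> 'a \<Rightarrow> 'a \<Rightarrow> 'a set" where
  "geod_image E g x y = g ` {0..gdist E x y}"

definition rips_hyperbolic :: "('a \<Rightarrow> 'a \<Rightarrow> bool) \<Rightarrow> real \<Rightarrow> bool" where
  "rips_hyperbolic E \<delta> \<longleftrightarrow>
     (\<forall>x y z g1 g2 g3. geodesic E g1 x y \<longrightarrow> geodesic E g2 y z \<longrightarrow> geodesic E g3 z x \<longrightarrow>
        (\<forall>u\<in>geod_image E g1 x y. \<exists>v\<in>geod_image E g2 y z \<union> geod_image E g3 z x.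
            real (gdist E u v) \<le> \<delta>))"

definition Fset :: "('a \<Rightarrow> 'a \<Rightarrow> bool) \<Rightarrow> real \<Rightarrow> 'a \<Rightarrow> 'a \<Rightarrow> nat \<Rightarrow> nat \<Rightarrow> 'a set" where
  "Fset E \<delta> e x k n =
     {z. \<not> (real (gdist E e z) \<le> 3 * \<delta>) \<and>
         (\<exists>y g i. gdist E x y \<le> k \<and> geodesic E g y e \<and> n \<le> i \<and> i \<le> 2 * n \<and>
                  i \<le> gdist E y e \<and> z = g i)}"

definition Ffun :: "('a \<Rightarrow> 'a \<Rightarrow> bool) \<Rightarrow> real \<Rightarrow> 'a \<Rightarrow> 'a \<Rightarrow> nat \<Rightarrow> nat \<Rightarrow> 'a \<Rightarrow> real" where
  "Ffun E \<delta> e x k n = indicator (Fset E \<delta> e x k n)"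

definition Hfun :: "('a \<Rightarrow> 'a \<Rightarrow> bool) \<Rightarrow> real \<Rightarrow> 'a \<Rightarrow> 'a \<Rightarrow> nat \<Rightarrow> 'a \<Rightarrow> real" where
  "Hfun E \<delta> e x n = (\<lambda>z. (1 / real n) * (\<Sum>k\<in>{k. 4 * k \<le> n}. Ffun E \<delta> e x k n z))"

text \<open>The l^p norm (functions considered here are finitely supported).\<close>
definition lp_norm :: "real \<Rightarrow> ('a \<Rightarrow> real) \<Rightarrow> real" where
  "lp_norm p f = (infsum (\<lambda>z. \<bar>f z\<bar> powr p) UNIV) powr (1 / p)"

end

theory Submission imports Defs begin

lemma walk_exists:
  assumes "graph_connected E"
  shows "\<exists>g. g 0 = x \<and> g (gdist E x y) = y \<and> walk E g (gdist E x y)"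
proof -
  from assms obtain g L where "g 0 = x \<and> g L = y \<and> walk E g L"
    unfolding graph_connected_def by blast
  hence "\<exists>L g. g 0 = x \<and> g L = y \<and> walk E g L" by blast
  thus ?thesis unfolding gdist_def by (rule LeastI_ex)
qed

lemma gdist_le:
  assumes "g 0 = x" "g L = y" "walk E g L"
  shows "gdist E x y \<le> L"
  unfolding gdist_def by (rule Least_le) (use assms in blast)

lemma gdist_refl: "gdist E x x = 0"
  using gdist_le[of "\<lambda>_. x" x 0 x E] by (simp add: walk_def)

lemma gdist_sym_le:
  assumes "simple_graph E" "graph_connected E"
  shows "gdist E y x \<le> gdist E x y"
proof -
  obtain g where g: "g 0 = x" "g (gdist E x y) = y" "walk E g (gdist E x y)"
    using walk_exists[OF assms(2)] by blast
  define L where "L = gdist E x y"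
  have "walk E (\<lambda>i. g (L - i)) L"
    unfolding walk_def
  proof (intro allI impI)
    fix i assume "i < L"
    hence "E (g (L - Suc i)) (g (Suc (L - Suc i)))" using g(3) unfolding walk_def L_def by auto
    moreover have "Suc (L - Suc i) = L - i" using \<open>i < L\<close> by simp
    ultimately show "E (g (L - i)) (g (L - Suc i))" using assms(1) unfolding simple_graph_def by metis
  qed
  thus ?thesis using gdist_le[of "\<lambda>i. g (L - i)" y L x E] g unfolding L_def by simp
qed

lemma gdist_sym:
  assumes "simple_graph E" "graph_connected E"
  shows "gdist E y x = gdist E x y"
  using gdist_sym_le[OF assms, of x y] gdist_sym_le[OF assms, of y x] by simp

lemma gdist_tri:
  assumes "graph_connected E"
  shows "gdist E x z \<le> gdist E x y + gdist E y z"
proof -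
  obtain g1 where g1: "g1 0 = x" "g1 (gdist E x y) = y" "walk E g1 (gdist E x y)"
    using walk_exists[OF assms] by blast
  obtain g2 where g2: "g2 0 = y" "g2 (gdist E y z) = z" "walk E g2 (gdist E y z)"
    using walk_exists[OF assms] by blast
  define L1 where "L1 = gdist E x y"
  define L2 where "L2 = gdist E y z"
  define g where "g = (\<lambda>i. if i \<le> L1 then g1 i else g2 (i - L1))"
  have "walk E g (L1 + L2)"
    unfolding walk_def
  proof (intro allI impI)
    fix i assume i: "i < L1 + L2"
    show "E (g i) (g (Suc i))"
    proof (cases "i < L1")
      case True
      thus ?thesis using g1(3) unfolding g_def walk_def L1_def by auto
    next
      case False
      hence "g i = g2 (i - L1)" using g1(2) g2(1) unfolding g_def L1_def by auto
      moreover have "g (Suc i) = g2 (Suc (i - L1))" using False unfolding g_def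
        by (simp add: Suc_diff_le)
      moreover have "i - L1 < L2" using i False by simp
      ultimately show ?thesis using g2(3) unfolding walk_def L2_def by auto
    qed
  qed
  moreover have "g 0 = x" using g1 unfolding g_def by simp
  moreover have "g (L1 + L2) = z"
    using g1 g2 unfolding g_def L1_def L2_def by auto
  ultimately show ?thesis using gdist_le unfolding L1_def L2_def by metis
qed

lemma geodesic_exists:
  assumes "graph_connected E"
  shows "\<exists>g. geodesic E g x y"
  using walk_exists[OF assms] unfolding geodesic_def by blast

lemma geodesic_dist:
  assumes "graph_connected E" "geodesic E g x y" "i \<le> gdist E x y"
  shows "gdist E x (g i) = i \<and> gdist E (g i) y = gdist E x y - i"
proof -
  have g: "g 0 = x" "g (gdist E x y) = y" "walk E g (gdist E x y)"
    using assms(2) unfolding geodesic_def by auto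
  have "walk E g i" using g(3) assms(3) unfolding walk_def by auto
  hence a: "gdist E x (g i) \<le> i" using gdist_le g(1) by metis
  have "walk E (\<lambda>t. g (i + t)) (gdist E x y - i)" using g(3) assms(3) unfolding walk_def by auto
  moreover have "g (i + (gdist E x y - i)) = y" using g(2) assms(3) by simp
  ultimately have b: "gdist E (g i) y \<le> gdist E x y - i"
    using gdist_le[of "\<lambda>t. g (i + t)"] by simp
  have "gdist E x y \<le> gdist E x (g i) + gdist E (g i) y" by (rule gdist_tri[OF assms(1)])
  thus ?thesis using a b assms(3) by linarith
qed


lemma card_F:
  fixes E :: "'a \<Rightarrow> 'a \<Rightarrow> bool" and \<delta> :: real and e :: 'a
  assumes sg: "simple_graph E" and con: "graph_connected E" and bg: "bounded_geometry E"
    and dpos: "\<delta> \<ge> 0" and hyp: "rips_hyperbolic E \<delta>"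
  shows "\<exists>M::real. M \<ge> 1 \<and> (\<forall>x n K. n \<ge> 1 \<longrightarrow> 4 * K \<le> n \<longrightarrow>
     finite (Fset E \<delta> e x K n) \<and> real (card (Fset E \<delta> e x K n)) \<le> M * real n)"
proof -
  note sym = gdist_sym[OF sg con]
  note tri = gdist_tri[OF con]
  obtain N0 :: nat where N0: "\<And>x. finite {y. real (gdist E x y) \<le> \<delta>} \<and> card {y. real (gdist E x y) \<le> \<delta>} \<le> N0"
    using bg unfolding bounded_geometry_def by blast
  obtain N1 :: nat where N1: "\<And>x. finite {y. real (gdist E x y) \<le> 6*\<delta>} \<and> card {y. real (gdist E x y) \<le> 6*\<delta>} \<le> N1"
    using bg unfolding bounded_geometry_def by blast
  define M where "M = real N1 + (5 + \<delta>) * real N0 + 1"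
  have "M \<ge> 1" unfolding M_def using dpos by simp
  moreover have "finite (Fset E \<delta> e x K n) \<and> real (card (Fset E \<delta> e x K n)) \<le> M * real n"
    if n1: "n \<ge> 1" and nK: "4 * K \<le> n" for x n K
  proof -
    define F where "F = Fset E \<delta> e x K n"
    have sub: "F \<subseteq> {z. real (gdist E x z) \<le> real (K + 2*n)}"
    proof
      fix z assume "z \<in> F"
      then obtain y g i where yg: "gdist E x y \<le> K" "geodesic E g y e" "n \<le> i" "i \<le> 2*n"
        "i \<le> gdist E y e" "z = g i" unfolding F_def Fset_def by blast
      have "gdist E y z = i" using geodesic_dist[OF con yg(2) yg(5)] yg(6) by simp
      hence "gdist E x z \<le> K + 2*n" using tri[of x z y] yg by linarith
      thus "z \<in> {z. real (gdist E x z) \<le> real (K + 2*n)}" by simp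
    qed
    obtain Nr :: nat where "finite {y. real (gdist E x y) \<le> real (K + 2*n)}"
      using bg unfolding bounded_geometry_def by blast
    hence fin: "finite F" using sub finite_subset by blast
    show ?thesis
    proof (cases "real n \<le> 2*\<delta>")
      case True
      have "F \<subseteq> {z. real (gdist E x z) \<le> 6*\<delta>}"
        using sub True nK by auto
      hence "card F \<le> N1" using N1[of x] card_mono order_trans by blast
      moreover have "real N1 \<le> M * real n"
      proof -
        have "real N1 \<le> M" unfolding M_def using dpos by simp
        also have "\<dots> \<le> M * real n" using \<open>M \<ge> 1\<close> n1 by simp
        finally show ?thesis .
      qed
      ultimately show ?thesis using fin unfolding F_def by simp
    next
      case False
      obtain h where h: "geodesic E h e x" using geodesic_exists[OF con] by blast
      define L where "L = gdist E e x"
      define c where "c = K + 2*n + nat \<lceil>\<delta>\<rceil>"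
      define J where "J = {L - c..L}"
      have "F \<subseteq> (\<Union>j\<in>J. {w. real (gdist E (h j) w) \<le> \<delta>})"
      proof
        fix z assume "z \<in> F"
        then obtain y g i where yg: "gdist E x y \<le> K" "geodesic E g y e" "n \<le> i" "i \<le> 2*n"
          "i \<le> gdist E y e" "z = g i" unfolding F_def Fset_def by blast
        have gd: "gdist E y z = i" "gdist E z e = gdist E y e - i"
          using geodesic_dist[OF con yg(2) yg(5)] yg(6) by auto
        obtain g3 where g3: "geodesic E g3 x y" using geodesic_exists[OF con] by blast
        have "z \<in> geod_image E g y e" unfolding geod_image_def using yg(5,6) by auto
        then obtain v where v: "v \<in> geod_image E h e x \<union> geod_image E g3 x y"
          "real (gdist E z v) \<le> \<delta>"
          using hyp[unfolded rips_hyperbolic_def, rule_format, OF yg(2) h g3] by blast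
        show "z \<in> (\<Union>j\<in>J. {w. real (gdist E (h j) w) \<le> \<delta>})"
        proof (cases "v \<in> geod_image E h e x")
          case True
          then obtain j where j: "j \<le> L" "v = h j" unfolding geod_image_def L_def by auto
          have dj: "gdist E e v = j" using geodesic_dist[OF con h, of j] j unfolding L_def by simp
          have "gdist E e z \<le> gdist E e v + gdist E v z" by (rule tri)
          moreover have "gdist E x e \<le> gdist E x y + gdist E y e" by (rule tri)
          moreover have "gdist E x e = L" using sym unfolding L_def by simp
          moreover have "gdist E e z = gdist E y e - i" using gd sym by simp
          moreover have "real (gdist E v z) \<le> \<delta>" using v(2) sym by simp
          moreover have "\<delta> \<le> real (nat \<lceil>\<delta>\<rceil>)" by linarith
          ultimately have "L \<le> j + c" using yg dj unfolding c_def by linarith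
          hence "j \<in> J" unfolding J_def using j by auto
          moreover have "real (gdist E (h j) z) \<le> \<delta>" using v(2) sym j by simp
          ultimately show ?thesis by blast
        next
          case False
          hence "v \<in> geod_image E g3 x y" using v by blast
          then obtain j where j: "j \<le> gdist E x y" "v = g3 j" unfolding geod_image_def by auto
          have "gdist E x v = j" using geodesic_dist[OF con g3 j(1)] j by simp
          have "gdist E y z \<le> gdist E y x + gdist E x z" by (rule tri)
          moreover have "gdist E x z \<le> gdist E x v + gdist E v z" by (rule tri)
          moreover have "real (gdist E v z) \<le> \<delta>" using v(2) sym by simp
          moreover have "gdist E y x \<le> K" using yg sym by simp
          ultimately have "real n \<le> 2 * \<delta>" using gd yg nK j \<open>gdist E x v = j\<close> by linarith
          thus ?thesis using \<open>\<not> real n \<le> 2*\<delta>\<close> by simp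
        qed
      qed
      hence "card F \<le> card (\<Union>j\<in>J. {w. real (gdist E (h j) w) \<le> \<delta>})"
        by (rule card_mono[rotated]) (use N0 J_def in auto)
      also have "\<dots> \<le> (\<Sum>j\<in>J. card {w. real (gdist E (h j) w) \<le> \<delta>})"
        by (rule card_UN_le) (simp add: J_def)
      also have "\<dots> \<le> (\<Sum>j\<in>J. N0)" by (rule sum_mono) (use N0 in auto)
      also have "\<dots> = card J * N0" by simp
      finally have cF: "real (card F) \<le> real (card J) * real N0" by (metis of_nat_le_iff of_nat_mult)
      have "card J \<le> c + 1" unfolding J_def by simp
      hence "real (card J) \<le> real K + 2 * real n + \<delta> + 2" unfolding c_def
        using dpos by (simp, linarith)
      also have "\<dots> \<le> (5 + \<delta>) * real n"
      proof -
        have "real K \<le> real n" using nK by simp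
        moreover have "\<delta> \<le> \<delta> * real n" using n1 dpos by (simp add: mult_le_cancel_left1)
        moreover have "1 \<le> real n" using n1 by simp
        ultimately show ?thesis by (simp add: algebra_simps)
      qed
      finally have "real (card J) * real N0 \<le> (5 + \<delta>) * real n * real N0"
        by (simp add: mult_right_mono)
      also have "\<dots> \<le> M * real n" unfolding M_def using n1 dpos
        by (simp add: algebra_simps)
      finally show ?thesis using cF fin unfolding F_def by simp
    qed
  qed
  ultimately show ?thesis by blast
qed


lemma card_shift:
  fixes A B :: "nat set"
  assumes "A \<subseteq> {..K}" "finite B" "\<And>k. k \<in> A \<Longrightarrow> k + d \<le> K \<Longrightarrow> k + d \<in> B"
  shows "card A \<le> card B + d"
proof -
  define A1 where "A1 = {k\<in>A. k + d \<le> K}"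
  define A2 where "A2 = {k\<in>A. K < k + d}"
  have fA: "finite A" using assms(1) finite_subset by blast
  have "A = A1 \<union> A2" unfolding A1_def A2_def by auto
  hence "card A \<le> card A1 + card A2" by (metis card_Un_le)
  moreover have "card A1 \<le> card B"
  proof -
    have "inj_on (\<lambda>k. k + d) A1" by (auto simp: inj_on_def)
    moreover have "(\<lambda>k. k + d) ` A1 \<subseteq> B" using assms(3) unfolding A1_def by auto
    ultimately show ?thesis using card_inj_on_le assms(2) by blast
  qed
  moreover have "card A2 \<le> d"
  proof -
    have "inj_on (\<lambda>k. K - k) A2" unfolding inj_on_def
    proof (intro ballI impI)
      fix a b assume "a \<in> A2" "b \<in> A2" "K - a = K - b"
      moreover have "a \<le> K" "b \<le> K" using \<open>a \<in> A2\<close> \<open>b \<in> A2\<close> assms(1) unfolding A2_def by auto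
      ultimately show "a = b" by linarith
    qed
    moreover have "(\<lambda>k. K - k) ` A2 \<subseteq> {..<d}" using assms(1) unfolding A2_def by auto
    ultimately show ?thesis using card_inj_on_le[of _ A2 "{..<d}"] by fastforce
  qed
  ultimately show ?thesis by linarith
qed

lemma Fset_mono: "k \<le> k' \<Longrightarrow> Fset E \<delta> e x k n \<subseteq> Fset E \<delta> e x k' n"
  unfolding Fset_def by (rule Collect_mono) (use le_trans in blast)

lemma Fset_shift:
  assumes "simple_graph E" "graph_connected E"
  shows "Fset E \<delta> e x k n \<subseteq> Fset E \<delta> e y (k + gdist E x y) n"
proof
  fix z assume "z \<in> Fset E \<delta> e x k n"
  then obtain y' g i where yg: "\<not> (real (gdist E e z) \<le> 3 * \<delta>)" "gdist E x y' \<le> k" "geodesic E g y' e"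
     "n \<le> i" "i \<le> 2 * n" "i \<le> gdist E y' e" "z = g i" unfolding Fset_def by blast
  have "gdist E y y' \<le> gdist E y x + gdist E x y'" by (rule gdist_tri[OF assms(2)])
  hence "gdist E y y' \<le> k + gdist E x y" using yg(2) gdist_sym[OF assms] by simp
  thus "z \<in> Fset E \<delta> e y (k + gdist E x y) n" unfolding Fset_def using yg by blast
qed

lemma sum_ind:
  assumes "finite S"
  shows "(\<Sum>k\<in>S. Ffun E \<delta> e x k n z) = real (card {k\<in>S. z \<in> Fset E \<delta> e x k n})"
  unfolding Ffun_def indicator_def using assms by (simp add: sum.If_cases Int_def)

lemma pointwise:
  assumes sg: "simple_graph E" and con: "graph_connected E" and n1: "n \<ge> 1"
  shows "\<bar>Hfun E \<delta> e x n z - Hfun E \<delta> e y n z\<bar> \<le> real (gdist E x y) / real n"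
    and "z \<notin> Fset E \<delta> e x (n div 4) n \<union> Fset E \<delta> e y (n div 4) n \<Longrightarrow>
         Hfun E \<delta> e x n z - Hfun E \<delta> e y n z = 0"
proof -
  define S where "S = {k::nat. 4 * k \<le> n}"
  have S: "S = {..n div 4}" unfolding S_def by auto
  have fS: "finite S" unfolding S by simp
  define A where "A = {k\<in>S. z \<in> Fset E \<delta> e x k n}"
  define B where "B = {k\<in>S. z \<in> Fset E \<delta> e y k n}"
  have H: "Hfun E \<delta> e x n z - Hfun E \<delta> e y n z = (real (card A) - real (card B)) / real n"
    unfolding Hfun_def A_def B_def S_def[symmetric] using sum_ind[OF fS, of E \<delta> e x n z] sum_ind[OF fS, of E \<delta> e y n z] by (simp add: diff_divide_distrib)
  have "card A \<le> card B + gdist E x y"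
    by (rule card_shift[where K="n div 4"]) (use fS Fset_shift[OF sg con, of \<delta> e x _ n y] in \<open>auto simp: A_def B_def S\<close>)
  moreover have "card B \<le> card A + gdist E x y"
    by (rule card_shift[where K="n div 4"]) (use fS Fset_shift[OF sg con, of \<delta> e y _ n x] gdist_sym[OF sg con, of x y] in \<open>auto simp: A_def B_def S\<close>)
  ultimately have "\<bar>real (card A) - real (card B)\<bar> \<le> real (gdist E x y)" by linarith
  thus "\<bar>Hfun E \<delta> e x n z - Hfun E \<delta> e y n z\<bar> \<le> real (gdist E x y) / real n"
    unfolding H using n1 by (simp add: divide_right_mono)
  assume z: "z \<notin> Fset E \<delta> e x (n div 4) n \<union> Fset E \<delta> e y (n div 4) n"
  have "A = {}" using z Fset_mono[of _ "n div 4" E \<delta> e x n] unfolding A_def S by auto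
  moreover have "B = {}" using z Fset_mono[of _ "n div 4" E \<delta> e y n] unfolding B_def S by auto
  ultimately show "Hfun E \<delta> e x n z - Hfun E \<delta> e y n z = 0" unfolding H by simp
qed


theorem lemma3p4:
  fixes E :: "'a \<Rightarrow> 'a \<Rightarrow> bool" and \<delta> p :: real and e :: 'a
  assumes "simple_graph E" and "graph_connected E" and "bounded_geometry E"
    and "\<delta> \<ge> 0" and "rips_hyperbolic E \<delta>" and "p \<ge> 1"
  shows "\<exists>C::real. \<forall>R::real. \<forall>n::nat. \<forall>x y. R \<ge> 0 \<longrightarrow> n \<ge> 1 \<longrightarrow> real (gdist E x y) \<le> R \<longrightarrow>
     lp_norm p (\<lambda>z. Hfun E \<delta> e x n z - Hfun E \<delta> e y n z)
       \<le> 2 * C * (R + 1) * real n powr (- ((p - 1) / p))"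
proof -
  obtain M where M1: "M \<ge> 1" and Mc: "\<And>x n K. n \<ge> 1 \<Longrightarrow> 4 * K \<le> n \<Longrightarrow>
     finite (Fset E \<delta> e x K n) \<and> real (card (Fset E \<delta> e x K n)) \<le> M * real n"
    using card_F[OF assms(1-5), of e] by blast
  have "lp_norm p (\<lambda>z. Hfun E \<delta> e x n z - Hfun E \<delta> e y n z)
       \<le> 2 * M * (R + 1) * real n powr (- ((p - 1) / p))"
    if R0: "R \<ge> 0" and n1: "n \<ge> 1" and dR: "real (gdist E x y) \<le> R" for R n x y
  proof -
    define d where "d = real (gdist E x y)"
    define D where "D = (\<lambda>z. Hfun E \<delta> e x n z - Hfun E \<delta> e y n z)"
    define S where "S = Fset E \<delta> e x (n div 4) n \<union> Fset E \<delta> e y (n div 4) n"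
    have p0: "p > 0" using assms(6) by simp
    have nK: "4 * (n div 4) \<le> n" by simp
    have fS: "finite S" unfolding S_def using Mc[OF n1 nK] by simp
    have cS: "real (card S) \<le> 2 * M * real n"
    proof -
      have "card S \<le> card (Fset E \<delta> e x (n div 4) n) + card (Fset E \<delta> e y (n div 4) n)"
        unfolding S_def by (rule card_Un_le)
      hence "real (card S) \<le> real (card (Fset E \<delta> e x (n div 4) n)) + real (card (Fset E \<delta> e y (n div 4) n))"
        by linarith
      thus ?thesis using Mc[OF n1 nK, of x] Mc[OF n1 nK, of y] by linarith
    qed
    have Dle: "\<bar>D z\<bar> \<le> d / real n" for z
      unfolding D_def d_def by (rule pointwise(1)[OF assms(1,2) n1])
    have D0: "z \<notin> S \<Longrightarrow> D z = 0" for z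
      unfolding D_def S_def by (rule pointwise(2)[OF assms(1,2) n1])
    define T where "T = infsum (\<lambda>z. \<bar>D z\<bar> powr p) UNIV"
    have "T = infsum (\<lambda>z. \<bar>D z\<bar> powr p) S"
      unfolding T_def by (rule infsum_cong_neutral) (auto simp: D0)
    also have "\<dots> = (\<Sum>z\<in>S. \<bar>D z\<bar> powr p)" using fS by simp
    finally have T: "T = (\<Sum>z\<in>S. \<bar>D z\<bar> powr p)" .
    have T0: "T \<ge> 0" unfolding T by (rule sum_nonneg) simp
    have "T \<le> (\<Sum>z\<in>S. (d / real n) powr p)"
      unfolding T by (rule sum_mono) (use Dle p0 in \<open>auto intro: powr_mono2\<close>)
    also have "\<dots> = real (card S) * (d / real n) powr p" by simp
    also have "\<dots> \<le> (2 * M * real n) * (d / real n) powr p"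
      by (rule mult_right_mono[OF cS]) simp
    finally have T1: "T \<le> 2 * M * real n * (d powr p / real n powr p)" by (simp add: powr_divide)
    define Y where "Y = 2 * M * (R + 1) * real n powr (- ((p - 1) / p))"
    have Y0: "Y \<ge> 0" unfolding Y_def using M1 R0 by simp
    have "Y powr p = (2 * M) powr p * (R + 1) powr p * (real n powr (- ((p - 1) / p))) powr p"
      unfolding Y_def using M1 R0 by (simp add: powr_mult)
    also have "(real n powr (- ((p - 1) / p))) powr p = real n powr (1 - p)"
    proof -
      have "- ((p - 1) / p) * p = 1 - p" using p0 by (simp add: field_simps)
      thus ?thesis by (simp add: powr_powr)
    qed
    also have "real n powr (1 - p) = real n / real n powr p"
      using n1 by (simp add: powr_diff)
    finally have Yp: "Y powr p = (2 * M) powr p * (R + 1) powr p * (real n / real n powr p)" .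
    have a: "2 * M \<le> (2 * M) powr p"
      using powr_mono[of 1 p "2*M"] M1 assms(6) by simp
    have b: "d powr p \<le> (R + 1) powr p"
      using powr_mono2[of p d "R+1"] p0 dR unfolding d_def by simp
    have "2 * M * real n * (d powr p / real n powr p) = (2 * M) * d powr p * (real n / real n powr p)"
      by simp
    also have "\<dots> \<le> (2 * M) powr p * (R + 1) powr p * (real n / real n powr p)"
      by (intro mult_right_mono mult_mono a b) (use M1 in auto)
    finally have "T \<le> Y powr p" using T1 Yp by simp
    hence "T powr (1 / p) \<le> (Y powr p) powr (1 / p)"
      using T0 p0 by (intro powr_mono2) auto
    also have "\<dots> = Y" using p0 Y0 by (simp add: powr_powr)
    finally show ?thesis unfolding lp_norm_def T_def D_def Y_def .
  qed
  thus ?thesis by blast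
qed

end
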